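(* Let $n>1$, let $\mathbf{A}\in\mathbb{R}^{n\times n}$ be symmetric positive definite with $\mathbf{I}-\mathbf{A}$ invertible, $\mathbf{b}\in\mathbb{R}^n$, $\mathcal{FP}(\mathbf{x})=\mathbf{A}\mathbf{x}+\mathbf{b}$, and $\mathbf{x}^\star$ the unique fixed point of $\mathcal{FP}$. Let $\mathbf{v}_1,\mathbf{v}_2$ be two orthogonal eigenvectors of $\mathbf{A}$ with eigenvalues $\lambda_1,\lambda_2$, such that at most one of $\lambda_1,\lambda_2$ is larger than $1$ and none equals $1$, and let $\mathbf{x}^0$ satisfy $\mathbf{x}^0-\mathbf{x}^\star\in\mathrm{span}\{\mathbf{v}_1,\mathbf{v}_2\}$. Then the sequence $\{\mathbf{x}^i\}$ generated by AA$^\star$(1) applied to $\mathcal{FP}$ from $\mathbf{x}^0$ converges to $\mathbf{x}^\star$ (even though the fixed-point iteration $\mathcal{FP}$ itself need not be contractive).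
   Context: Let $\Delta\mathcal{FP}(\mathbf{x})=\mathcal{FP}(\mathbf{x})-\mathbf{x}$ and $\|\cdot\|$ the Euclidean norm. The restarted Anderson acceleration AA$^\star$(1) is the iteration: for $i=0,2,4,\dots$, set $\mathbf{x}^{i+1}=\mathcal{FP}(\mathbf{x}^i)$; choose $\alpha^{(i+1)}\in\mathbb{R}$ minimizing $\|\Delta\mathcal{FP}(\mathbf{x}^{i+1})+\alpha^{(i+1)}(\Delta\mathcal{FP}(\mathbf{x}^i)-\Delta\mathcal{FP}(\mathbf{x}^{i+1}))\|$; set $\mathbf{x}^{i+2}=\mathcal{FP}(\mathbf{x}^{i+1})+\alpha^{(i+1)}(\mathcal{FP}(\mathbf{x}^i)-\mathcal{FP}(\mathbf{x}^{i+1}))$. *)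

theory Defs
  imports "HOL-Analysis.Analysis"
begin

definition sym_matrix :: "real^'n^'n \<Rightarrow> bool" where
  "sym_matrix A \<longleftrightarrow> transpose A = A"

definition pos_def_matrix :: "real^'n^'n \<Rightarrow> bool" where
  "pos_def_matrix A \<longleftrightarrow> sym_matrix A \<and> (\<forall>x. x \<noteq> 0 \<longrightarrow> x \<bullet> (A *v x) > 0)"

definition DeltaFP :: "('a::real_vector \<Rightarrow> 'a) \<Rightarrow> 'a \<Rightarrow> 'a" where
  "DeltaFP FP x = FP x - x"

text \<open>The pair (x, alpha) is a run of restarted Anderson acceleration AA*(1) on FP
  started at x0: for every even i, x(i+1) = FP(x i), alpha(i+1) is a minimiser
  (any one, if it is not unique) of the least squares problem, and
  x(i+2) = FP(x(i+1)) + alpha(i+1) (FP(x i) - FP(x(i+1))).\<close>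
definition AA_star1_run ::
  "('a::real_normed_vector \<Rightarrow> 'a) \<Rightarrow> 'a \<Rightarrow> (nat \<Rightarrow> 'a) \<Rightarrow> (nat \<Rightarrow> real) \<Rightarrow> bool" where
  "AA_star1_run FP x0 x \<alpha> \<longleftrightarrow>
     x 0 = x0 \<and>
     (\<forall>i. even i \<longrightarrow>
        x (i + 1) = FP (x i) \<and>
        (\<forall>\<beta>::real.
           norm (DeltaFP FP (x (i + 1)) + \<alpha> (i + 1) *\<^sub>R (DeltaFP FP (x i) - DeltaFP FP (x (i + 1))))
           \<le> norm (DeltaFP FP (x (i + 1)) + \<beta> *\<^sub>R (DeltaFP FP (x i) - DeltaFP FP (x (i + 1))))) \<and>
        x (i + 2) = FP (x (i + 1)) + \<alpha> (i + 1) *\<^sub>R (FP (x i) - FP (x (i + 1))))"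

end

theory Submission
  imports Defs
begin
lemma rho_lt:
  fixes l1 l2 :: real
  assumes "l1 > 0" "l2 > 0" "l1 \<noteq> 1" "l2 \<noteq> 1" "\<not> (l1 > 1 \<and> l2 > 1)"
  shows "l1*l2*\<bar>l2-l1\<bar> < l1*\<bar>l1-1\<bar> + l2*\<bar>l2-1\<bar>"
proof -
  have sym: "\<And>a b::real. 0<a \<Longrightarrow> a<b \<Longrightarrow> b<1 \<Longrightarrow> a*b*(b-a) < a*(1-a) + b*(1-b)"
  proof -
    fix a b :: real assume h: "0<a" "a<b" "b<1"
    have "a*b*(b-a) < a*(b-a)" using h by (intro mult_strict_right_mono) (auto intro: mult_strict_left_mono[where c=a, of b 1, simplified])
    also have "\<dots> \<le> a*(1-a)" using h by (intro mult_left_mono) auto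
    finally show "a*b*(b-a) < a*(1-a) + b*(1-b)" using h by (smt (verit) mult_pos_pos)
  qed
  have mix: "\<And>a b::real. 0<a \<Longrightarrow> a<1 \<Longrightarrow> 1<b \<Longrightarrow> a*b*(b-a) < a*(1-a) + b*(b-1)"
  proof -
    fix a b :: real assume h: "0<a" "a<1" "1<b"
    have "a*(1-a) + b*(b-1) - a*b*(b-a) = (1-a)*(b-a)*(b-1)" by (simp add: algebra_simps power2_eq_square)
    also have "\<dots> > 0" using h by simp
    finally show "a*b*(b-a) < a*(1-a) + b*(b-1)" by simp
  qed
  consider "l1 = l2" | "l1 < l2" | "l2 < l1" by linarith
  thus ?thesis
  proof cases
    case 1 thus ?thesis using assms by (simp add: abs_if)
  next
    case 2
    show ?thesis
    proof (cases "l2 < 1")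
      case True thus ?thesis using sym[of l1 l2] 2 assms by (simp add: abs_if)
    next
      case False
      hence "l2 > 1" using assms by auto
      hence "l1 < 1" using assms by auto
      thus ?thesis using mix[of l1 l2] 2 assms \<open>l2>1\<close> by (simp add: abs_if)
    qed
  next
    case 3
    show ?thesis
    proof (cases "l1 < 1")
      case True thus ?thesis using sym[of l2 l1] 3 assms by (simp add: abs_if algebra_simps)
    next
      case False
      hence "l1 > 1" using assms by auto
      hence "l2 < 1" using assms by auto
      thus ?thesis using mix[of l2 l1] 3 assms \<open>l1>1\<close> by (simp add: abs_if algebra_simps)
    qed
  qed
qed


lemma two_step_core:
  fixes n1 n2 l1 l2 c1 c2 a b :: real
  assumes n: "n1 > 0" "n2 > 0" and l: "l1 > 0" "l2 > 0" "l1 \<noteq> 1" "l2 \<noteq> 1"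
  and S1: "n1*c1^2*(l1-1)^3*(l1 - a*(l1-1)) + n2*c2^2*(l2-1)^3*(l2 - a*(l2-1)) = 0"
  and S2: "n1*(l1*(l1 - a*(l1-1))*c1)^2*(l1-1)^3*(l1 - b*(l1-1))
         + n2*(l2*(l2 - a*(l2-1))*c2)^2*(l2-1)^3*(l2 - b*(l2-1)) = 0"
  shows "\<bar>l1*(l1 - b*(l1-1))*(l1*(l1 - a*(l1-1))*c1)\<bar>
     \<le> (l1*l2*\<bar>l2-l1\<bar>/(l1*\<bar>l1-1\<bar>+l2*\<bar>l2-1\<bar>))^2 * \<bar>c1\<bar>"
proof -
  define m1 where "m1 = l1 - 1"
  define m2 where "m2 = l2 - 1"
  define d1 where "d1 = l1 - a*m1"
  define d2 where "d2 = l2 - a*m2"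
  define e1 where "e1 = l1 - b*m1"
  define e2 where "e2 = l2 - b*m2"
  define \<delta> where "\<delta> = l2 - l1"
  define M where "M = l1*\<bar>m1\<bar>+l2*\<bar>m2\<bar>"
  define q where "q = (l1*l2*\<bar>\<delta>\<bar>/M)^2"
  define X where "X = n1*c1^2*m1^2"
  define Y where "Y = n2*c2^2*m2^2"
  define D where "D = X*m1^2 + Y*m2^2"
  have m: "m1 \<noteq> 0" "m2 \<noteq> 0" using l by (auto simp: m1_def m2_def)
  have Mpos: "M > 0" using m l by (auto simp: M_def intro!: add_pos_pos)
  have q0: "q \<ge> 0" by (simp add: q_def)
  have S1': "X*m1*d1 + Y*m2*d2 = 0" using S1 unfolding X_def Y_def d1_def d2_def m1_def m2_def
    by (simp add: power2_eq_square power3_eq_cube algebra_simps)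
  have S2': "l1^2*d1^2*X*m1*e1 + l2^2*d2^2*Y*m2*e2 = 0" using S2
    unfolding X_def Y_def d1_def d2_def m1_def m2_def e1_def e2_def
    by (simp add: power2_eq_square power3_eq_cube algebra_simps)
  have dd: "m2*d1 - m1*d2 = \<delta>" unfolding d1_def d2_def m1_def m2_def \<delta>_def by algebra
  have ee: "m2*e1 - m1*e2 = \<delta>" unfolding e1_def e2_def m1_def m2_def \<delta>_def by algebra
  have K1a: "D*d1 = Y*m2*\<delta>"
  proof -
    have "D*d1 = Y*m2*(m2*d1 - m1*d2) + m1*(X*m1*d1 + Y*m2*d2)" unfolding D_def by algebra
    thus ?thesis using S1' dd by simp
  qed
  have K1b: "D*d2 = -X*m1*\<delta>"
  proof -
    have "D*d2 = -X*m1*(m2*d1 - m1*d2) + m2*(X*m1*d1 + Y*m2*d2)" unfolding D_def by algebra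
    thus ?thesis using S1' dd by simp
  qed
  define X' where "X' = l1^2*d1^2*X"
  define Y' where "Y' = l2^2*d2^2*Y"
  define D' where "D' = X'*m1^2 + Y'*m2^2"
  have K2a: "D'*e1 = Y'*m2*\<delta>"
  proof -
    have "D'*e1 = Y'*m2*(m2*e1 - m1*e2) + m1*(l1^2*d1^2*X*m1*e1 + l2^2*d2^2*Y*m2*e2)"
      unfolding D'_def X'_def Y'_def by algebra
    thus ?thesis using S2' ee by simp
  qed
  have goal: "\<bar>l1*e1*(l1*d1*c1)\<bar> \<le> q * \<bar>c1\<bar>"
  proof (cases "c1 = 0 \<or> c2 = 0 \<or> \<delta> = 0")
    case True
    show ?thesis
    proof (cases "c1 = 0")
      case True thus ?thesis by simp
    next
      case False
      hence Xp: "X > 0" using n m by (simp add: X_def)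
      have Dp: "D > 0" unfolding D_def using Xp m n by (intro add_pos_nonneg) (auto simp: Y_def)
      have "Y*m2*\<delta> = 0" using True False by (auto simp: Y_def)
      hence "D*d1 = 0" using K1a by simp
      hence "d1 = 0" using Dp by simp
      thus ?thesis using q0 by simp
    qed
  next
    case False
    hence c: "c1 \<noteq> 0" "c2 \<noteq> 0" "\<delta> \<noteq> 0" by auto
    have Xp: "X > 0" using n m c by (simp add: X_def)
    have Yp: "Y > 0" using n m c by (simp add: Y_def)
    have Dp: "D > 0" unfolding D_def using Xp Yp m by (intro add_pos_pos) auto
    have d1e: "d1 = Y*m2*\<delta>/D" using K1a Dp by (simp add: field_simps)
    have d2e: "d2 = -X*m1*\<delta>/D" using K1b Dp by (simp add: field_simps)
    have D'e: "D' = X*Y*m1^2*m2^2*\<delta>^2*(l1^2*Y + l2^2*X)/D^2"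
      unfolding D'_def X'_def Y'_def d1e d2e using Dp by (simp add: field_simps power2_eq_square)
    have Pp: "l1^2*Y + l2^2*X > 0" using Xp Yp l by (intro add_pos_pos) auto
    have D'p: "D' > 0" unfolding D'e using Xp Yp Dp Pp m c by (intro divide_pos_pos mult_pos_pos) auto
    have e1e: "e1 = l2^2*X*\<delta>/(m2*(l1^2*Y + l2^2*X))"
    proof -
      define G where "G = X*Y*m1^2*m2*\<delta>^2/D^2"
      have Gnz: "G \<noteq> 0" unfolding G_def using Xp Yp Dp m c by simp
      have h1: "D' = G * (m2*(l1^2*Y + l2^2*X))" unfolding D'e G_def by (simp add: power2_eq_square)
      have h2: "Y'*m2*\<delta> = G * (l2^2*X*\<delta>)" unfolding G_def Y'_def d2e using Dp
        by (simp add: field_simps power2_eq_square)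
      have "G * (e1 * (m2*(l1^2*Y + l2^2*X))) = G * (l2^2*X*\<delta>)" using K2a unfolding h1 h2
        by (simp add: algebra_simps)
      hence "e1 * (m2*(l1^2*Y + l2^2*X)) = l2^2*X*\<delta>" using Gnz by simp
      moreover have "m2*(l1^2*Y + l2^2*X) \<noteq> 0" using m Pp by simp
      ultimately show ?thesis by (simp add: eq_divide_eq)
    qed
    define F where "F = l1^2*l2^2*\<delta>^2*X*Y/(D*(l1^2*Y + l2^2*X))"
    have Fe: "l1*e1*(l1*d1*c1) = F*c1"
    proof -
      have "l1*e1*(l1*d1*c1) = (m2 * (l1^2*l2^2*\<delta>^2*X*Y*c1)) / (m2 * (D*(l1^2*Y + l2^2*X)))"
        unfolding e1e d1e by (simp add: power2_eq_square mult_ac)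
      also have "\<dots> = (l1^2*l2^2*\<delta>^2*X*Y*c1) / (D*(l1^2*Y + l2^2*X))"
        using m(2) by (rule mult_divide_mult_cancel_left)
      finally show ?thesis unfolding F_def by simp
    qed
    have F0: "F \<ge> 0" unfolding F_def using Xp Yp Dp Pp by simp
    have iden: "D*(l1^2*Y + l2^2*X) - M^2*X*Y = (l2*\<bar>m1\<bar>*X - l1*\<bar>m2\<bar>*Y)^2"
    proof -
      have gen: "\<And>a b::real. (X*a^2 + Y*b^2)*(l1^2*Y + l2^2*X) - (l1*a+l2*b)^2*X*Y = (l2*a*X - l1*b*Y)^2"
        by (simp add: power2_eq_square algebra_simps)
      have "m1^2 = \<bar>m1\<bar>^2" "m2^2 = \<bar>m2\<bar>^2" by simp_all
      thus ?thesis unfolding D_def M_def using gen[of "\<bar>m1\<bar>" "\<bar>m2\<bar>"] by simp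
    qed
    have ineq: "M^2*(X*Y) \<le> D*(l1^2*Y + l2^2*X)"
    proof -
      have "0 \<le> D*(l1^2*Y + l2^2*X) - M^2*X*Y" unfolding iden by simp
      moreover have "M^2*X*Y = M^2*(X*Y)" by simp
      ultimately show ?thesis by linarith
    qed
    have "F \<le> q"
    proof -
      have "F = (l1^2*l2^2*\<delta>^2) * (X*Y)/(D*(l1^2*Y + l2^2*X))" unfolding F_def by simp
      also have "\<dots> \<le> (l1^2*l2^2*\<delta>^2) * (X*Y)/(M^2*(X*Y))"
        using ineq Xp Yp Mpos Dp Pp by (intro divide_left_mono mult_nonneg_nonneg mult_pos_pos) auto
      also have "\<dots> = q" unfolding q_def using Xp Yp Mpos by (simp add: field_simps power2_eq_square)
      finally show ?thesis .
    qed
    thus ?thesis unfolding Fe using F0 by (simp add: abs_mult mult_right_mono)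
  qed
  thus ?thesis unfolding q_def M_def \<delta>_def e1_def d1_def m1_def m2_def by simp
qed

lemma foc:
  fixes D S :: real
  assumes "\<And>t. 0 \<le> -2*t*S + t^2*D" "D > 0"
  shows "S = 0"
proof -
  have "0 \<le> -2*(S/D)*S + (S/D)^2*D" using assms(1) .
  also have "\<dots> = -(S^2/D)" using assms(2) by (simp add: field_simps power2_eq_square)
  finally have "S^2/D \<le> 0" by simp
  hence "S^2 \<le> 0" using assms(2) by (simp add: divide_le_0_iff)
  thus ?thesis by simp
qed

lemma foc2:
  fixes n1 n2 m1 m2 l1 l2 p q a :: real
  assumes n: "n1 > 0" "n2 > 0" and m: "m1 \<noteq> 0" "m2 \<noteq> 0"
  and min: "\<And>\<beta>. (m1*p*(l1 - a*m1))^2*n1 + (m2*q*(l2 - a*m2))^2*n2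
              \<le> (m1*p*(l1 - \<beta>*m1))^2*n1 + (m2*q*(l2 - \<beta>*m2))^2*n2"
  shows "n1*p^2*m1^3*(l1 - a*m1) + n2*q^2*m2^3*(l2 - a*m2) = 0"
proof -
  define S where "S = n1*p^2*m1^3*(l1 - a*m1) + n2*q^2*m2^3*(l2 - a*m2)"
  define D where "D = n1*p^2*m1^4 + n2*q^2*m2^4"
  show ?thesis
  proof (cases "D = 0")
    case True
    have "n1*p^2*m1^4 \<ge> 0" "n2*q^2*m2^4 \<ge> 0" using n by simp_all
    hence "n1*p^2*m1^4 = 0" "n2*q^2*m2^4 = 0" using True unfolding D_def by linarith+
    hence "p = 0" "q = 0" using n m by auto
    thus ?thesis by simp
  next
    case False
    have "n1*p^2*m1^4 \<ge> 0" "n2*q^2*m2^4 \<ge> 0" using n by simp_all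
    hence Dp: "D > 0" using False unfolding D_def by linarith
    have "0 \<le> -2*t*S + t^2*D" for t
    proof -
      have "(m1*p*(l1 - (a+t)*m1))^2*n1 + (m2*q*(l2 - (a+t)*m2))^2*n2
          - ((m1*p*(l1 - a*m1))^2*n1 + (m2*q*(l2 - a*m2))^2*n2) = -2*t*S + t^2*D"
        unfolding S_def D_def by (simp add: power2_eq_square power3_eq_cube algebra_simps)
           (simp add: power_def algebra_simps numeral_eq_Suc)
      thus ?thesis using min[of "a+t"] by linarith
    qed
    thus ?thesis using foc Dp unfolding S_def by blast
  qed
qed

lemma geo4_limit:
  fixes f :: "nat \<Rightarrow> real"
  assumes f0: "\<And>i. f i \<ge> 0" and st: "\<And>i. f (i+4) \<le> q * f i" and q: "0 \<le> q" "q < 1"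
  shows "f \<longlonglongrightarrow> 0"
proof -
  define C where "C = f 0 + f 1 + f 2 + f 3"
  have fr: "f (4*m + r) \<le> q^m * f r" for m r
  proof (induction m)
    case 0 show ?case by simp
  next
    case (Suc m)
    have "f (4*Suc m + r) = f ((4*m + r) + 4)" by (simp add: algebra_simps)
    also have "\<dots> \<le> q * f (4*m+r)" by (rule st)
    also have "\<dots> \<le> q * (q^m * f r)" using Suc q by (intro mult_left_mono) auto
    finally show ?case by (simp add: mult.assoc)
  qed
  have bnd: "f i \<le> q^(i div 4) * C" for i
  proof -
    have "i = 4*(i div 4) + i mod 4" by simp
    hence "f i \<le> q^(i div 4) * f (i mod 4)" using fr by metis
    also have "f (i mod 4) \<le> C"
    proof -
      have "i mod 4 < 4" by simp
      hence "i mod 4 = 0 \<or> i mod 4 = 1 \<or> i mod 4 = 2 \<or> i mod 4 = 3" by linarith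
      thus ?thesis unfolding C_def using f0[of 0] f0[of 1] f0[of 2] f0[of 3] by auto
    qed
    hence "q^(i div 4) * f (i mod 4) \<le> q^(i div 4) * C" using q by (intro mult_left_mono) auto
    finally show ?thesis .
  qed
  have lim1: "(\<lambda>i. q^(i div 4)) \<longlonglongrightarrow> 0"
  proof -
    have "filterlim (\<lambda>i::nat. i div 4) sequentially sequentially"
      unfolding filterlim_at_top
    proof
      fix Z :: nat
      show "eventually (\<lambda>i. Z \<le> i div 4) sequentially"
        using eventually_ge_at_top[of "4*Z"] by eventually_elim auto
    qed
    moreover have "(\<lambda>m. q^m) \<longlonglongrightarrow> 0" using q by (intro LIMSEQ_power_zero) auto
    ultimately show ?thesis by (rule filterlim_compose[of "\<lambda>m. q^m", rotated])
  qed
  have "(\<lambda>i. q^(i div 4) * C) \<longlonglongrightarrow> 0" using tendsto_mult_left_zero[OF lim1, of C] by simp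
  thus ?thesis
    by (rule Lim_null_comparison[rotated]) (use bnd f0 in auto)
qed

lemma decomp:
  fixes A :: "real^'n^'n" and b xstar x0 v1 v2 :: "real^'n"
    and lam1 lam2 :: real and x :: "nat \<Rightarrow> real^'n" and \<alpha> :: "nat \<Rightarrow> real"
  assumes fxp: "A *v xstar + b = xstar"
    and v: "v1 \<noteq> 0" "v2 \<noteq> 0" and orth: "v1 \<bullet> v2 = 0"
    and ev: "A *v v1 = lam1 *\<^sub>R v1" "A *v v2 = lam2 *\<^sub>R v2"
    and x0: "x0 - xstar \<in> span {v1, v2}"
    and run0: "x 0 = x0"
    and runs: "\<And>i. even i \<Longrightarrow> x (i + 1) = A *v x i + b \<and>
        (\<forall>\<beta>::real.
           norm ((A *v x (i+1) + b - x (i+1)) + \<alpha> (i + 1) *\<^sub>R ((A *v x i + b - x i) - (A *v x (i+1) + b - x (i+1))))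
           \<le> norm ((A *v x (i+1) + b - x (i+1)) + \<beta> *\<^sub>R ((A *v x i + b - x i) - (A *v x (i+1) + b - x (i+1))))) \<and>
        x (i + 2) = (A *v x (i+1) + b) + \<alpha> (i + 1) *\<^sub>R ((A *v x i + b) - (A *v x (i+1) + b))"
  shows "\<exists>c1 c2. (\<forall>i. x i = xstar + c1 i *\<^sub>R v1 + c2 i *\<^sub>R v2) \<and>
     (\<forall>i. even i \<longrightarrow> c1 (i+1) = lam1 * c1 i \<and> c2 (i+1) = lam2 * c2 i \<and>
          c1 (i+2) = lam1 * (lam1 - \<alpha> (i+1) * (lam1 - 1)) * c1 i \<and>
          c2 (i+2) = lam2 * (lam2 - \<alpha> (i+1) * (lam2 - 1)) * c2 i \<and>
          (\<forall>\<beta>. ((lam1-1)*c1 i*(lam1 - \<alpha> (i+1)*(lam1-1)))^2*(v1\<bullet>v1) + ((lam2-1)*c2 i*(lam2 - \<alpha> (i+1)*(lam2-1)))^2*(v2\<bullet>v2)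
              \<le> ((lam1-1)*c1 i*(lam1 - \<beta>*(lam1-1)))^2*(v1\<bullet>v1) + ((lam2-1)*c2 i*(lam2 - \<beta>*(lam2-1)))^2*(v2\<bullet>v2)))"
proof -
  define e where "e i = x i - xstar" for i
  define n1 where "n1 = v1 \<bullet> v1"
  define n2 where "n2 = v2 \<bullet> v2"
  define c1 where "c1 i = (e i \<bullet> v1) / n1" for i
  define c2 where "c2 i = (e i \<bullet> v2) / n2" for i
  have n: "n1 > 0" "n2 > 0" using v by (simp_all add: n1_def n2_def)
  have bb: "b = xstar - A *v xstar" using fxp by (simp add: algebra_simps)
  have FPe: "A *v y + b = xstar + A *v (y - xstar)" for y
    unfolding bb by (simp add: algebra_simps)
  have Alin: "A *v (p *\<^sub>R v1 + q *\<^sub>R v2) = (lam1*p) *\<^sub>R v1 + (lam2*q) *\<^sub>R v2" for p q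
    by (simp add: algebra_simps ev)
  have coef: "c1 i = p \<and> c2 i = q" if "e i = p *\<^sub>R v1 + q *\<^sub>R v2" for i p q
    using that n orth unfolding c1_def c2_def
    by (simp add: inner_add_left inner_commute[of v2 v1] n1_def n2_def)
  have nrm: "norm (p *\<^sub>R v1 + q *\<^sub>R v2)^2 = p^2*n1 + q^2*n2" for p q
    using orth unfolding power2_norm_eq_inner
    by (simp add: inner_add_left inner_add_right
        inner_commute[of v2 v1] n1_def n2_def power2_eq_square algebra_simps)
  have step: "e (i+1) = (lam1*p) *\<^sub>R v1 + (lam2*q) *\<^sub>R v2 \<and>
      e (i+2) = (lam1*(lam1 - \<alpha> (i+1)*(lam1-1))*p) *\<^sub>R v1 + (lam2*(lam2 - \<alpha> (i+1)*(lam2-1))*q) *\<^sub>R v2 \<and>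
      (\<forall>\<beta>. ((lam1-1)*p*(lam1 - \<alpha> (i+1)*(lam1-1)))^2*n1 + ((lam2-1)*q*(lam2 - \<alpha> (i+1)*(lam2-1)))^2*n2
              \<le> ((lam1-1)*p*(lam1 - \<beta>*(lam1-1)))^2*n1 + ((lam2-1)*q*(lam2 - \<beta>*(lam2-1)))^2*n2)"
    if ei: "even i" "e i = p *\<^sub>R v1 + q *\<^sub>R v2" for i p q
  proof -
    note R = runs[OF ei(1)]
    have R1: "x (i + 1) = A *v x i + b" using R by blast
    have R3: "x (i + 2) = (A *v x (i+1) + b) + \<alpha> (i + 1) *\<^sub>R ((A *v x i + b) - (A *v x (i+1) + b))" using R by blast
    have xi: "x i = xstar + (p *\<^sub>R v1 + q *\<^sub>R v2)" using ei(2) unfolding e_def by (simp add: algebra_simps)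
    have e1: "e (i+1) = (lam1*p) *\<^sub>R v1 + (lam2*q) *\<^sub>R v2"
      using R1 unfolding e_def FPe by (simp add: xi Alin)
    have x1: "x (i+1) = xstar + ((lam1*p) *\<^sub>R v1 + (lam2*q) *\<^sub>R v2)" using e1 unfolding e_def by (simp add: algebra_simps)
    have e2: "e (i+2) = (lam1*(lam1 - \<alpha> (i+1)*(lam1-1))*p) *\<^sub>R v1 + (lam2*(lam2 - \<alpha> (i+1)*(lam2-1))*q) *\<^sub>R v2"
    proof -
      have "e (i+2) = A *v e (i+1) + \<alpha> (i+1) *\<^sub>R (A *v e i - A *v e (i+1))"
        using R3 unfolding e_def FPe by simp
      also have "\<dots> = (lam1*(lam1*p)) *\<^sub>R v1 + (lam2*(lam2*q)) *\<^sub>R v2 + \<alpha> (i+1) *\<^sub>R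
           (((lam1*p) *\<^sub>R v1 + (lam2*q) *\<^sub>R v2) - ((lam1*(lam1*p)) *\<^sub>R v1 + (lam2*(lam2*q)) *\<^sub>R v2))"
        unfolding e1 ei(2) Alin ..
      also have "\<dots> = (lam1*(lam1 - \<alpha> (i+1)*(lam1-1))*p) *\<^sub>R v1 + (lam2*(lam2 - \<alpha> (i+1)*(lam2-1))*q) *\<^sub>R v2"
        by (simp add: algebra_simps)
      finally show ?thesis .
    qed
    have expr: "(A *v x (i+1) + b - x (i+1)) + \<beta> *\<^sub>R ((A *v x i + b - x i) - (A *v x (i+1) + b - x (i+1)))
       = ((lam1-1)*p*(lam1 - \<beta>*(lam1-1))) *\<^sub>R v1 + ((lam2-1)*q*(lam2 - \<beta>*(lam2-1))) *\<^sub>R v2" for \<beta>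
    proof -
      have "(A *v x (i+1) + b - x (i+1)) + \<beta> *\<^sub>R ((A *v x i + b - x i) - (A *v x (i+1) + b - x (i+1)))
        = (A *v e (i+1) - e (i+1)) + \<beta> *\<^sub>R ((A *v e i - e i) - (A *v e (i+1) - e (i+1)))"
        unfolding FPe e_def by (simp add: algebra_simps)
      also have "\<dots> = ((lam1*(lam1*p)) *\<^sub>R v1 + (lam2*(lam2*q)) *\<^sub>R v2 - ((lam1*p) *\<^sub>R v1 + (lam2*q) *\<^sub>R v2))
         + \<beta> *\<^sub>R ((((lam1*p) *\<^sub>R v1 + (lam2*q) *\<^sub>R v2) - (p *\<^sub>R v1 + q *\<^sub>R v2))
           - ((lam1*(lam1*p)) *\<^sub>R v1 + (lam2*(lam2*q)) *\<^sub>R v2 - ((lam1*p) *\<^sub>R v1 + (lam2*q) *\<^sub>R v2)))"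
        unfolding e1 ei(2) Alin ..
      also have "\<dots> = ((lam1-1)*p*(lam1 - \<beta>*(lam1-1))) *\<^sub>R v1 + ((lam2-1)*q*(lam2 - \<beta>*(lam2-1))) *\<^sub>R v2"
        by (simp add: algebra_simps) (simp only: mult_2_right scaleR_add_right scaleR_add_left distrib_left add.assoc)
      finally show ?thesis .
    qed
    have "((lam1-1)*p*(lam1 - \<alpha> (i+1)*(lam1-1)))^2*n1 + ((lam2-1)*q*(lam2 - \<alpha> (i+1)*(lam2-1)))^2*n2
              \<le> ((lam1-1)*p*(lam1 - \<beta>*(lam1-1)))^2*n1 + ((lam2-1)*q*(lam2 - \<beta>*(lam2-1)))^2*n2" for \<beta>
    proof -
      have "norm (((lam1-1)*p*(lam1 - \<alpha> (i+1)*(lam1-1))) *\<^sub>R v1 + ((lam2-1)*q*(lam2 - \<alpha> (i+1)*(lam2-1))) *\<^sub>R v2)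
         \<le> norm (((lam1-1)*p*(lam1 - \<beta>*(lam1-1))) *\<^sub>R v1 + ((lam2-1)*q*(lam2 - \<beta>*(lam2-1))) *\<^sub>R v2)"
        using R expr by metis
      hence "norm (((lam1-1)*p*(lam1 - \<alpha> (i+1)*(lam1-1))) *\<^sub>R v1 + ((lam2-1)*q*(lam2 - \<alpha> (i+1)*(lam2-1))) *\<^sub>R v2)^2
         \<le> norm (((lam1-1)*p*(lam1 - \<beta>*(lam1-1))) *\<^sub>R v1 + ((lam2-1)*q*(lam2 - \<beta>*(lam2-1))) *\<^sub>R v2)^2"
        by (intro power_mono) auto
      thus ?thesis unfolding nrm .
    qed
    thus ?thesis using e1 e2 by blast
  qed
  have rep: "e i = c1 i *\<^sub>R v1 + c2 i *\<^sub>R v2" for i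
  proof -
    have "e (2*m) = c1 (2*m) *\<^sub>R v1 + c2 (2*m) *\<^sub>R v2" for m
    proof (induction m)
      case 0
      obtain p q where "x0 - xstar = p *\<^sub>R v1 + q *\<^sub>R v2" using x0
        by (auto simp: span_insert span_singleton) (metis add.commute diff_add_cancel)
      hence "e 0 = p *\<^sub>R v1 + q *\<^sub>R v2" by (simp add: e_def run0)
      thus ?case using coef by simp
    next
      case (Suc m)
      obtain p q where pq: "e (2*m+2) = p *\<^sub>R v1 + q *\<^sub>R v2" using step[OF _ Suc] by fastforce
      hence "c1 (2*m+2) = p \<and> c2 (2*m+2) = q" using coef by blast
      thus ?case using pq by simp
    qed
    moreover have "e (2*m+1) = c1 (2*m+1) *\<^sub>R v1 + c2 (2*m+1) *\<^sub>R v2" for m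
    proof -
      obtain p q where pq: "e (2*m+1) = p *\<^sub>R v1 + q *\<^sub>R v2" using step[OF _ calculation[of m]] by fastforce
      hence "c1 (2*m+1) = p \<and> c2 (2*m+1) = q" using coef by blast
      thus ?thesis using pq by simp
    qed
    ultimately show ?thesis by (metis oddE evenE)
  qed
  have A: "\<forall>i. x i = xstar + c1 i *\<^sub>R v1 + c2 i *\<^sub>R v2"
  proof
    fix i
    show "x i = xstar + c1 i *\<^sub>R v1 + c2 i *\<^sub>R v2" using rep[of i] unfolding e_def
      by (simp add: algebra_simps)
  qed
  have B: "\<forall>i. even i \<longrightarrow> c1 (i+1) = lam1 * c1 i \<and> c2 (i+1) = lam2 * c2 i \<and>
          c1 (i+2) = lam1 * (lam1 - \<alpha> (i+1) * (lam1 - 1)) * c1 i \<and>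
          c2 (i+2) = lam2 * (lam2 - \<alpha> (i+1) * (lam2 - 1)) * c2 i \<and>
          (\<forall>\<beta>. ((lam1-1)*c1 i*(lam1 - \<alpha> (i+1)*(lam1-1)))^2*(v1\<bullet>v1) + ((lam2-1)*c2 i*(lam2 - \<alpha> (i+1)*(lam2-1)))^2*(v2\<bullet>v2)
              \<le> ((lam1-1)*c1 i*(lam1 - \<beta>*(lam1-1)))^2*(v1\<bullet>v1) + ((lam2-1)*c2 i*(lam2 - \<beta>*(lam2-1)))^2*(v2\<bullet>v2))"
  proof (intro allI impI)
    fix i :: nat assume "even i"
    note S = step[OF this rep[of i]]
    have c1: "c1 (i+1) = lam1 * c1 i \<and> c2 (i+1) = lam2 * c2 i" using coef S by blast
    have c2: "c1 (i+2) = lam1 * (lam1 - \<alpha> (i+1) * (lam1 - 1)) * c1 i \<and>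
          c2 (i+2) = lam2 * (lam2 - \<alpha> (i+1) * (lam2 - 1)) * c2 i" using coef S by blast
    show "c1 (i+1) = lam1 * c1 i \<and> c2 (i+1) = lam2 * c2 i \<and>
          c1 (i+2) = lam1 * (lam1 - \<alpha> (i+1) * (lam1 - 1)) * c1 i \<and>
          c2 (i+2) = lam2 * (lam2 - \<alpha> (i+1) * (lam2 - 1)) * c2 i \<and>
          (\<forall>\<beta>. ((lam1-1)*c1 i*(lam1 - \<alpha> (i+1)*(lam1-1)))^2*(v1\<bullet>v1) + ((lam2-1)*c2 i*(lam2 - \<alpha> (i+1)*(lam2-1)))^2*(v2\<bullet>v2)
              \<le> ((lam1-1)*c1 i*(lam1 - \<beta>*(lam1-1)))^2*(v1\<bullet>v1) + ((lam2-1)*c2 i*(lam2 - \<beta>*(lam2-1)))^2*(v2\<bullet>v2))"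
      using c1 c2 S unfolding n1_def n2_def by blast
  qed
  show ?thesis using A B by blast
qed

theorem corollary6:
  fixes A :: "real^'n^'n" and b xstar x0 v1 v2 :: "real^'n"
    and lam1 lam2 :: real and x :: "nat \<Rightarrow> real^'n" and \<alpha> :: "nat \<Rightarrow> real"
  assumes "CARD('n) > 1"
    and "pos_def_matrix A"
    and "invertible (mat 1 - A)"
    and "A *v xstar + b = xstar"
    and "v1 \<noteq> 0" and "v2 \<noteq> 0" and "v1 \<bullet> v2 = 0"
    and "A *v v1 = lam1 *\<^sub>R v1" and "A *v v2 = lam2 *\<^sub>R v2"
    and "\<not> (lam1 > 1 \<and> lam2 > 1)"
    and "lam1 \<noteq> 1" and "lam2 \<noteq> 1"
    and "x0 - xstar \<in> span {v1, v2}"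
    and "AA_star1_run (\<lambda>y. A *v y + b) x0 x \<alpha>"
  shows "x \<longlonglongrightarrow> xstar"
proof -
  note run = assms(14)[unfolded AA_star1_run_def DeltaFP_def]
  have run0: "x 0 = x0" using run by blast
  have runs: "\<And>i. even i \<Longrightarrow> x (i + 1) = A *v x i + b \<and>
        (\<forall>\<beta>::real.
           norm ((A *v x (i+1) + b - x (i+1)) + \<alpha> (i + 1) *\<^sub>R ((A *v x i + b - x i) - (A *v x (i+1) + b - x (i+1))))
           \<le> norm ((A *v x (i+1) + b - x (i+1)) + \<beta> *\<^sub>R ((A *v x i + b - x i) - (A *v x (i+1) + b - x (i+1))))) \<and>
        x (i + 2) = (A *v x (i+1) + b) + \<alpha> (i + 1) *\<^sub>R ((A *v x i + b) - (A *v x (i+1) + b))"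
    using run by blast
  obtain c1 c2 where xr: "\<forall>i. x i = xstar + c1 i *\<^sub>R v1 + c2 i *\<^sub>R v2"
    and cs: "\<forall>i. even i \<longrightarrow> c1 (i+1) = lam1 * c1 i \<and> c2 (i+1) = lam2 * c2 i \<and>
          c1 (i+2) = lam1 * (lam1 - \<alpha> (i+1) * (lam1 - 1)) * c1 i \<and>
          c2 (i+2) = lam2 * (lam2 - \<alpha> (i+1) * (lam2 - 1)) * c2 i \<and>
          (\<forall>\<beta>. ((lam1-1)*c1 i*(lam1 - \<alpha> (i+1)*(lam1-1)))^2*(v1\<bullet>v1) + ((lam2-1)*c2 i*(lam2 - \<alpha> (i+1)*(lam2-1)))^2*(v2\<bullet>v2)
              \<le> ((lam1-1)*c1 i*(lam1 - \<beta>*(lam1-1)))^2*(v1\<bullet>v1) + ((lam2-1)*c2 i*(lam2 - \<beta>*(lam2-1)))^2*(v2\<bullet>v2))"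
    using decomp[OF assms(4-9) assms(13) run0 runs] by blast
  have n: "v1 \<bullet> v1 > 0" "v2 \<bullet> v2 > 0" using assms(5,6) by simp_all
  have m: "lam1 - 1 \<noteq> 0" "lam2 - 1 \<noteq> 0" using assms(11,12) by simp_all
  have lpos: "lam1 > 0" "lam2 > 0"
  proof -
    have "v1 \<bullet> (A *v v1) > 0" "v2 \<bullet> (A *v v2) > 0"
      using assms(2,5,6) unfolding pos_def_matrix_def by auto
    hence "lam1 * (v1 \<bullet> v1) > 0" "lam2 * (v2 \<bullet> v2) > 0" using assms(8,9) by simp_all
    thus "lam1 > 0" "lam2 > 0" using n by (simp_all add: zero_less_mult_iff)
  qed
  define \<rho> where "\<rho> = lam1*lam2*\<bar>lam2-lam1\<bar>/(lam1*\<bar>lam1-1\<bar>+lam2*\<bar>lam2-1\<bar>)"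
  have \<rho>: "0 \<le> \<rho>" "\<rho> < 1"
  proof -
    have Mp: "lam1*\<bar>lam1-1\<bar>+lam2*\<bar>lam2-1\<bar> > 0" using lpos m by (intro add_pos_pos) auto
    show "0 \<le> \<rho>" unfolding \<rho>_def using lpos Mp by simp
    show "\<rho> < 1" unfolding \<rho>_def using rho_lt[OF lpos assms(11,12,10)] Mp by simp
  qed
  have q: "0 \<le> \<rho>^2" "\<rho>^2 < 1" using \<rho> by (simp_all add: power_less_one_iff)
  have S: "(v1\<bullet>v1)*(c1 i)^2*(lam1-1)^3*(lam1 - \<alpha> (i+1)*(lam1-1))
      + (v2\<bullet>v2)*(c2 i)^2*(lam2-1)^3*(lam2 - \<alpha> (i+1)*(lam2-1)) = 0" if "even i" for i
    using foc2[OF n m, of "c1 i" lam1 "\<alpha> (i+1)" "c2 i" lam2] cs that by blast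
  have ev4: "\<bar>c1 (i+4)\<bar> \<le> \<rho>^2 * \<bar>c1 i\<bar> \<and> \<bar>c2 (i+4)\<bar> \<le> \<rho>^2 * \<bar>c2 i\<bar>" if "even i" for i
  proof -
    have ei2: "even (i+2)" using that by simp
    have C0: "c1 (i+2) = lam1 * (lam1 - \<alpha> (i+1) * (lam1 - 1)) * c1 i"
      "c2 (i+2) = lam2 * (lam2 - \<alpha> (i+1) * (lam2 - 1)) * c2 i" using cs that by blast+
    have C2: "c1 (i+4) = lam1 * (lam1 - \<alpha> (i+3) * (lam1 - 1)) * c1 (i+2)"
      "c2 (i+4) = lam2 * (lam2 - \<alpha> (i+3) * (lam2 - 1)) * c2 (i+2)"
    proof -
      have eq: "i+2+2 = i+4" "i+2+1 = i+3" by simp_all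
      have "c1 (i+2+2) = lam1 * (lam1 - \<alpha> (i+2+1) * (lam1 - 1)) * c1 (i+2)"
        "c2 (i+2+2) = lam2 * (lam2 - \<alpha> (i+2+1) * (lam2 - 1)) * c2 (i+2)" using cs ei2 by blast+
      thus "c1 (i+4) = lam1 * (lam1 - \<alpha> (i+3) * (lam1 - 1)) * c1 (i+2)"
        "c2 (i+4) = lam2 * (lam2 - \<alpha> (i+3) * (lam2 - 1)) * c2 (i+2)" by (simp_all only: eq)
    qed
    have S1: "(v1\<bullet>v1)*(c1 i)^2*(lam1-1)^3*(lam1 - \<alpha> (i+1)*(lam1-1))
      + (v2\<bullet>v2)*(c2 i)^2*(lam2-1)^3*(lam2 - \<alpha> (i+1)*(lam2-1)) = 0" using S that .
    have S2: "(v1\<bullet>v1)*(lam1 * (lam1 - \<alpha> (i+1) * (lam1 - 1)) * c1 i)^2*(lam1-1)^3*(lam1 - \<alpha> (i+3)*(lam1-1))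
      + (v2\<bullet>v2)*(lam2 * (lam2 - \<alpha> (i+1) * (lam2 - 1)) * c2 i)^2*(lam2-1)^3*(lam2 - \<alpha> (i+3)*(lam2-1)) = 0"
    proof -
      have eq: "i+2+1 = i+3" by simp
      show ?thesis using S[OF ei2] unfolding C0 eq .
    qed
    have b1: "\<bar>c1 (i+4)\<bar> \<le> \<rho>^2 * \<bar>c1 i\<bar>"
      unfolding C2 C0 \<rho>_def
      by (rule two_step_core[OF n lpos assms(11,12) S1 S2])
    have S1': "(v2\<bullet>v2)*(c2 i)^2*(lam2-1)^3*(lam2 - \<alpha> (i+1)*(lam2-1))
      + (v1\<bullet>v1)*(c1 i)^2*(lam1-1)^3*(lam1 - \<alpha> (i+1)*(lam1-1)) = 0" using S1 by (simp add: add.commute)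
    have S2': "(v2\<bullet>v2)*(lam2 * (lam2 - \<alpha> (i+1) * (lam2 - 1)) * c2 i)^2*(lam2-1)^3*(lam2 - \<alpha> (i+3)*(lam2-1))
      + (v1\<bullet>v1)*(lam1 * (lam1 - \<alpha> (i+1) * (lam1 - 1)) * c1 i)^2*(lam1-1)^3*(lam1 - \<alpha> (i+3)*(lam1-1)) = 0"
      using S2 by (simp add: add.commute)
    have "\<bar>c2 (i+4)\<bar> \<le> (lam2*lam1*\<bar>lam1-lam2\<bar>/(lam2*\<bar>lam2-1\<bar>+lam1*\<bar>lam1-1\<bar>))^2 * \<bar>c2 i\<bar>"
      unfolding C2 C0
      by (rule two_step_core[OF n(2,1) lpos(2,1) assms(12,11) S1' S2'])
    also have "lam2*lam1*\<bar>lam1-lam2\<bar>/(lam2*\<bar>lam2-1\<bar>+lam1*\<bar>lam1-1\<bar>) = \<rho>"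
      unfolding \<rho>_def by (simp add: abs_minus_commute ac_simps)
    finally show ?thesis using b1 by blast
  qed
  have all4: "\<bar>c1 (i+4)\<bar> \<le> \<rho>^2 * \<bar>c1 i\<bar> \<and> \<bar>c2 (i+4)\<bar> \<le> \<rho>^2 * \<bar>c2 i\<bar>" for i
  proof (cases "even i")
    case True thus ?thesis using ev4 by blast
  next
    case False
    obtain k where k: "i = 2*k+1" using False by (rule oddE)
    define j where "j = 2*k"
    have j: "i = j + 1" "even j" unfolding j_def using k by simp_all
    have ej4: "even (j+4)" using j(2) by simp
    note cj = cs[rule_format, OF j(2)]
    note cj4 = cs[rule_format, OF ej4]
    have r1: "c1 (j+1) = lam1 * c1 j" "c2 (j+1) = lam2 * c2 j" using cj by blast+
    have r2: "c1 (j+5) = lam1 * c1 (j+4)" "c2 (j+5) = lam2 * c2 (j+4)"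
    proof -
      have eq: "j+4+1 = j+5" by simp
      have "c1 (j+4+1) = lam1 * c1 (j+4)" "c2 (j+4+1) = lam2 * c2 (j+4)" using cj4 by blast+
      thus "c1 (j+5) = lam1 * c1 (j+4)" "c2 (j+5) = lam2 * c2 (j+4)" by (simp_all only: eq)
    qed
    have "\<bar>c1 (j+5)\<bar> = lam1 * \<bar>c1 (j+4)\<bar>" using r2 lpos by (simp add: abs_mult)
    also have "\<dots> \<le> lam1 * (\<rho>^2 * \<bar>c1 j\<bar>)" using ev4[OF j(2)] lpos by (intro mult_left_mono) auto
    also have "\<dots> = \<rho>^2 * \<bar>c1 (j+1)\<bar>" using r1 lpos by (simp add: abs_mult)
    finally have a1: "\<bar>c1 (j+5)\<bar> \<le> \<rho>^2 * \<bar>c1 (j+1)\<bar>" .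
    have "\<bar>c2 (j+5)\<bar> = lam2 * \<bar>c2 (j+4)\<bar>" using r2 lpos by (simp add: abs_mult)
    also have "\<dots> \<le> lam2 * (\<rho>^2 * \<bar>c2 j\<bar>)" using ev4[OF j(2)] lpos by (intro mult_left_mono) auto
    also have "\<dots> = \<rho>^2 * \<bar>c2 (j+1)\<bar>" using r1 lpos by (simp add: abs_mult)
    finally have a2: "\<bar>c2 (j+5)\<bar> \<le> \<rho>^2 * \<bar>c2 (j+1)\<bar>" .
    have "i + 4 = j + 5" using j by simp
    thus ?thesis using a1 a2 j(1) by (simp only:)
  qed
  have l1: "(\<lambda>i. \<bar>c1 i\<bar>) \<longlonglongrightarrow> 0" by (rule geo4_limit[OF _ _ q]) (use all4 in auto)
  have l2: "(\<lambda>i. \<bar>c2 i\<bar>) \<longlonglongrightarrow> 0" by (rule geo4_limit[OF _ _ q]) (use all4 in auto)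
  have "c1 \<longlonglongrightarrow> 0" "c2 \<longlonglongrightarrow> 0" using l1 l2 by (simp_all add: tendsto_rabs_zero_iff)
  hence "(\<lambda>i. xstar + c1 i *\<^sub>R v1 + c2 i *\<^sub>R v2) \<longlonglongrightarrow> xstar + 0 *\<^sub>R v1 + 0 *\<^sub>R v2"
    by (intro tendsto_intros)
  hence "(\<lambda>i. x i) \<longlonglongrightarrow> xstar" using xr by simp
  thus ?thesis by simp
qed

end
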